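(* Let $\mathbb{F}$ be a field, $\mathcal{C} \subseteq \mathbb{F}^{m \times n}$ a linear code with $k = \dim(\mathcal{C})$, and $p \in \mathbb{Z}$. Define $W_p(\mathcal{C}^\perp) = \{d_{M,p+rm}(\mathcal{C}^\perp) \mid r \in \mathbb{Z}, 1 \leq p + rm \leq mn - k\}$ and $\overline{W}_{p+k}(\mathcal{C}) = \{n + 1 - d_{M,p+k+rm}(\mathcal{C}) \mid r \in \mathbb{Z}, 1 \leq p + k + rm \leq k\}$. Then $\{1,2,\dots,n\} = W_p(\mathcal{C}^\perp) \cup \overline{W}_{p+k}(\mathcal{C})$, and this union is disjoint.
   Context: ${\rm Row}(V)$ is the row space. For a subspace $\mathcal{L} \subseteq \mathbb{F}^n$, $\mathcal{V}_\mathcal{L} = \{V \in \mathbb{F}^{m\times n} \mid {\rm Row}(V) \subseteq \mathcal{L}\}$, and for a linear code $\mathcal{D}$ and $1 \le r \le \dim\mathcal{D}$, $d_{M,r}(\mathcal{D}) = \min\{\dim \mathcal{L} \mid \mathcal{L} \subseteq \mathbb{F}^n \text{ subspace}, \dim(\mathcal{D} \cap \mathcal{V}_\mathcal{L}) \ge r\}$. The dual is $\mathcal{C}^\perp = \{D \in \mathbb{F}^{m\times n} \mid {\rm Trace}(CD^T) = 0 \ \forall C \in \mathcal{C}\}$, of dimension $mn - k$. *)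

theory Defs
  imports "HOL-Analysis.Analysis"
begin

text \<open>An m x n matrix over the field 'a is represented as a vector indexed by
  pairs (i,j) with i :: 'm (row index) and j :: 'n (column index); thus
  m = CARD('m), n = CARD('n).\<close>

type_synonym ('a, 'm, 'n) mat = "'a ^ ('m \<times> 'n)"

definition row_of :: "('a, 'm::finite, 'n::finite) mat \<Rightarrow> 'm \<Rightarrow> 'a ^ 'n" where
  "row_of V i = (\<chi> j. V $ (i, j))"

definition Row :: "('a::field, 'm::finite, 'n::finite) mat \<Rightarrow> ('a ^ 'n) set" where
  "Row V = vec.span (range (row_of V))"

definition VL :: "('a::field ^ 'n::finite) set \<Rightarrow> ('a, 'm::finite, 'n) mat set" where
  "VL L = {V. Row V \<subseteq> L}"

definition dM :: "nat \<Rightarrow> ('a::field, 'm::finite, 'n::finite) mat set \<Rightarrow> nat" where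
  "dM r D = (LEAST d. \<exists>L :: ('a ^ 'n) set. vec.subspace L \<and> vec.dim L = d
                        \<and> vec.dim (D \<inter> (VL L :: ('a, 'm, 'n) mat set)) \<ge> r)"

definition trace_prod :: "('a::field, 'm::finite, 'n::finite) mat \<Rightarrow> ('a, 'm, 'n) mat \<Rightarrow> 'a" where
  "trace_prod C D = (\<Sum>i\<in>UNIV. \<Sum>j\<in>UNIV. C $ (i, j) * D $ (i, j))"
  \<comment> \<open>= Trace(C D^T)\<close>

definition dual_code :: "('a::field, 'm::finite, 'n::finite) mat set \<Rightarrow> ('a, 'm, 'n) mat set" where
  "dual_code C = {D. \<forall>X\<in>C. trace_prod X D = 0}"

definition W_dual :: "int \<Rightarrow> ('a::field, 'm::finite, 'n::finite) mat set \<Rightarrow> int set" where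
  "W_dual p C = (let m = int CARD('m); n = int CARD('n); k = int (vec.dim C) in
     {int (dM (nat (p + r * m)) (dual_code C)) | r. 1 \<le> p + r * m \<and> p + r * m \<le> m * n - k})"

definition Wbar :: "int \<Rightarrow> ('a::field, 'm::finite, 'n::finite) mat set \<Rightarrow> int set" where
  "Wbar q C = (let m = int CARD('m); n = int CARD('n); k = int (vec.dim C) in
     {n + 1 - int (dM (nat (q + r * m)) C) | r. 1 \<le> q + r * m \<and> q + r * m \<le> k})"

end

theory Submission
  imports Defs
begin


definition dotp :: "'a::field^'i::finite \<Rightarrow> 'a^'i \<Rightarrow> 'a" where
  "dotp x y = (\<Sum>i\<in>UNIV. x$i * y$i)"

definition perp :: "('a::field^'i::finite) set \<Rightarrow> ('a^'i) set" where
  "perp S = {y. \<forall>x\<in>S. dotp x y = 0}"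

lemma dotp_comm: "dotp x y = dotp y x"
  unfolding dotp_def by (simp add: mult.commute)
lemma dotp_add_left: "dotp (x + z) y = dotp x y + dotp z y"
  unfolding dotp_def by (simp add: distrib_right sum.distrib)
lemma dotp_add_right: "dotp x (y + z) = dotp x y + dotp x z"
  unfolding dotp_def by (simp add: distrib_left sum.distrib)
lemma dotp_scale_left: "dotp (c *s x) y = c * dotp x y"
  unfolding dotp_def by (simp add: sum_distrib_left mult.assoc)
lemma dotp_scale_right: "dotp x (c *s y) = c * dotp x y"
  unfolding dotp_def by (simp add: sum_distrib_left algebra_simps)
lemma dotp_zero_left[simp]: "dotp 0 y = 0"
  unfolding dotp_def by simp
lemma dotp_zero_right[simp]: "dotp x 0 = 0"
  unfolding dotp_def by simp
lemma dotp_diff_left: "dotp (x - z) y = dotp x y - dotp z y"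
  unfolding dotp_def by (simp add: left_diff_distrib sum_subtractf)
lemma dotp_axis_left: "dotp (axis i 1) y = y $ i"
proof -
  have "dotp (axis i 1) y = (\<Sum>j\<in>UNIV. if j = i then y $ j else 0)"
    unfolding dotp_def by (rule sum.cong) (auto simp: axis_def)
  also have "\<dots> = y $ i" by simp
  finally show ?thesis .
qed
lemma dotp_sum_left: "finite B \<Longrightarrow> dotp (\<Sum>b\<in>B. f b) y = (\<Sum>b\<in>B. dotp (f b) y)"
  by (induction B rule: finite_induct) (auto simp: dotp_add_left)

lemma subspace_perp: "vec.subspace (perp S)"
  unfolding vec.subspace_def perp_def by (auto simp: dotp_add_right dotp_scale_right)

lemma perp_span: "perp (vec.span S) = perp S"
proof
  show "perp (vec.span S) \<subseteq> perp S" unfolding perp_def using vec.span_superset by blast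
  show "perp S \<subseteq> perp (vec.span S)"
  proof
    fix y assume y: "y \<in> perp S"
    have sub: "vec.subspace {x. dotp x y = 0}"
      unfolding vec.subspace_def by (auto simp: dotp_add_left dotp_scale_left)
    have "S \<subseteq> {x. dotp x y = 0}" using y unfolding perp_def by auto
    then have "vec.span S \<subseteq> {x. dotp x y = 0}" using vec.span_minimal sub by blast
    then show "y \<in> perp (vec.span S)" unfolding perp_def by auto
  qed
qed

lemma dim_le_card: "vec.dim (S :: ('a::field^'i::finite) set) \<le> CARD('i)"
  by (metis vec.dim_subset subset_UNIV vec_dim_card)

lemma rank_nullity_vec:
  fixes g :: "'a::field^'i::finite \<Rightarrow> 'a^'j::finite"
  assumes lin: "Vector_Spaces.linear (*s) (*s) g"
  shows "vec.dim (range g) + vec.dim {x. g x = 0} = CARD('i)"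
proof -
  have add: "\<And>x y. g (x + y) = g x + g y" and sc: "\<And>c x. g (c *s x) = c *s g x"
    using lin unfolding Vector_Spaces.linear_iff by auto
  have g0: "g 0 = 0" using sc[of 0 0] by simp
  have gdiff: "g (x - y) = g x - g y" for x y
  proof -
    have "g x = g (x - y) + g y" using add[of "x - y" y] by simp
    then show ?thesis by (simp add: algebra_simps)
  qed
  let ?K = "{x. g x = 0}"
  have sK: "vec.subspace ?K"
    unfolding vec.subspace_def by (auto simp: add sc g0)
  obtain B where B: "B \<subseteq> ?K" "vec.independent B" "?K \<subseteq> vec.span B" "card B = vec.dim ?K"
    by (rule vec.basis_exists[of ?K])
  obtain C where C: "B \<subseteq> C" "C \<subseteq> UNIV" "vec.independent C" "UNIV \<subseteq> vec.span C"
    by (rule vec.maximal_independent_subset_extend[OF subset_UNIV B(2)])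
  have fC: "finite C" using C(3) by (rule vec.finiteI_independent)
  have spC: "vec.span C = UNIV" using C(4) by auto
  have "vec.dim C = CARD('i)"
  proof -
    have "vec.dim C = vec.dim (UNIV::('a^'i) set)" using vec.dim_span[of C] spC by simp
    then show ?thesis using vec_dim_card[where ?'n='i] by (simp del: vec.dim_UNIV)
  qed
  then have cardC: "card C = CARD('i)"
    using vec.dim_eq_card_independent[OF C(3)] by simp
  let ?W = "vec.span (C - B)"
  have indW: "vec.independent (C - B)" using C vec.independent_mono by blast
  have fB: "finite B" using fC C(1) finite_subset by blast
  have dimW: "vec.dim ?W = card C - card B"
  proof -
    have "vec.dim ?W = vec.dim (C - B)" by (rule vec.dim_span)
    also have "\<dots> = card (C - B)" by (rule vec.dim_eq_card_independent[OF indW])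
    also have "\<dots> = card C - card B" using card_Diff_subset[OF fB C(1)] .
    finally show ?thesis .
  qed
  have spB: "vec.span B \<subseteq> ?K" using vec.span_minimal[OF B(1) sK] .
  have KB: "vec.span B = ?K" using spB B(3) by blast
  have sW: "vec.subspace ?W" by (rule vec.subspace_span)
  have sum_univ: "{x + y |x y. x \<in> ?K \<and> y \<in> ?W} = UNIV"
  proof -
    have CB: "C = B \<union> (C - B)" using C by blast
    have "vec.span C = vec.span (B \<union> (C - B))" using CB by (rule arg_cong)
    also have "\<dots> = {x + y |x y. x \<in> vec.span B \<and> y \<in> ?W}"
      by (rule vec.span_Un)
    finally have "vec.span C = {x + y |x y. x \<in> vec.span B \<and> y \<in> ?W}" .
    then show ?thesis using C KB by auto
  qed
  have "vec.dim (UNIV :: ('a^'i) set) + vec.dim (?K \<inter> ?W) = vec.dim ?K + vec.dim ?W"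
    using vec.dim_sums_Int[OF sK sW] sum_univ by simp
  then have "vec.dim (?K \<inter> ?W) = 0"
    using dimW B(4) cardC card_mono[OF fC C(1)] by (simp add: card_cart_basis del: vec.dim_eq_0)
  then have KW0: "?K \<inter> ?W \<subseteq> {0}" by simp
  have inj: "inj_on g (vec.span ?W)"
  proof (rule inj_onI)
    fix x y assume x: "x \<in> vec.span ?W" and y: "y \<in> vec.span ?W" and e: "g x = g y"
    have "x - y \<in> ?W" using x y vec.subspace_diff[OF sW] by (simp add: vec.span_span)
    moreover have "x - y \<in> ?K" using e gdiff by simp
    ultimately show "x = y" using KW0 by auto
  qed
  have rng: "range g = g ` ?W"
  proof
    show "range g \<subseteq> g ` ?W"
    proof
      fix z assume "z \<in> range g"
      then obtain w where z: "z = g w" by blast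
      have "w \<in> {x + y |x y. x \<in> ?K \<and> y \<in> ?W}" using sum_univ by blast
      then obtain a b where "w = a + b" "a \<in> ?K" "b \<in> ?W" by blast
      then have "z = g b" using z add by simp
      then show "z \<in> g ` ?W" using \<open>b \<in> ?W\<close> by blast
    qed
  qed auto
  have "vec.dim (range g) = vec.dim ?W"
    using rng vec.dim_image_eq[OF lin inj] by simp
  then show ?thesis using dimW B(4) cardC card_mono[OF fC C(1)] by simp
qed



lemma perp_construct:
  fixes B :: "('a::field^'i::finite) set"
  assumes e: "inj_on e B"
  assumes g_def: "g = (\<lambda>y. \<chi> i. if i \<in> e ` B then dotp (the_inv_into B e i) y else 0)"
  shows "Vector_Spaces.linear (*s) (*s) g"
    and "{y. g y = 0} = perp B"
    and "range g \<subseteq> {x. \<forall>i. i \<notin> e ` B \<longrightarrow> x$i = 0}"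
    and "\<And>b y. b \<in> B \<Longrightarrow> g y $ e b = dotp b y"
proof -
  show lin: "Vector_Spaces.linear (*s) (*s) g"
    unfolding Vector_Spaces.linear_iff g_def
    by (auto simp: vec_eq_iff dotp_add_right dotp_scale_right vec.vector_space_axioms)
  show gb: "\<And>b y. b \<in> B \<Longrightarrow> g y $ e b = dotp b y"
    unfolding g_def using e by (simp add: the_inv_into_f_f)
  show "range g \<subseteq> {x. \<forall>i. i \<notin> e ` B \<longrightarrow> x$i = 0}"
    unfolding g_def by auto
  show "{y. g y = 0} = perp B"
  proof
    show "{y. g y = 0} \<subseteq> perp B"
    proof
      fix y assume "y \<in> {y. g y = 0}"
      then have "g y = 0" by simp
      then have "dotp b y = 0" if "b \<in> B" for b using gb[OF that, of y] by simp
      then show "y \<in> perp B" unfolding perp_def by auto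
    qed
    show "perp B \<subseteq> {y. g y = 0}"
      unfolding perp_def g_def using e by (auto simp: vec_eq_iff the_inv_into_f_f)
  qed
qed

lemma subspace_range_linear:
  assumes "Vector_Spaces.linear (*s) (*s) (g :: 'a::field^'i::finite \<Rightarrow> 'a^'j::finite)"
  shows "vec.subspace (range g)"
proof -
  have add: "\<And>x y. g (x + y) = g x + g y" and sc: "\<And>c x. g (c *s x) = c *s g x"
    using assms unfolding Vector_Spaces.linear_iff by auto
  have g0: "g 0 = 0" using sc[of 0 0] by simp
  show ?thesis unfolding vec.subspace_def
  proof (intro conjI ballI allI)
    show "0 \<in> range g" using g0 by (metis rangeI)
    fix x y assume "x \<in> range g" "y \<in> range g"
    then obtain a b where "x = g a" "y = g b" by blast
    then have "x + y = g (a + b)" using add by simp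
    then show "x + y \<in> range g" by blast
  next
    fix c x assume "x \<in> range g"
    then obtain a where "x = g a" by blast
    then have "c *s x = g (c *s a)" using sc by simp
    then show "c *s x \<in> range g" by blast
  qed
qed

lemma subspace_substd: "vec.subspace {x::'a::field^'i::finite. \<forall>i. i \<notin> d \<longrightarrow> x$i = 0}"
  unfolding vec.subspace_def by auto

lemma basis_inj:
  fixes S :: "('a::field^'i::finite) set"
  assumes "vec.subspace S"
  obtains B and e :: "'a^'i \<Rightarrow> 'i" where "vec.independent B" "vec.span B = S" "card B = vec.dim S"
     "finite B" "inj_on e B"
proof -
  obtain B where B: "B \<subseteq> S" "vec.independent B" "S \<subseteq> vec.span B" "card B = vec.dim S"
    by (rule vec.basis_exists[of S])
  have fB: "finite B" using B(2) by (rule vec.finiteI_independent)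
  have spB: "vec.span B = S" using vec.span_subspace[OF B(1) B(3) assms] .
  have "card B \<le> card (UNIV :: 'i set)" using B(4) dim_le_card[of S] by simp
  then obtain e :: "'a^'i \<Rightarrow> 'i" where "inj_on e B"
    using card_le_inj[of B "UNIV::'i set"] fB by auto
  then show ?thesis using that B fB spB by blast
qed

lemma perp_lower:
  fixes S :: "('a::field^'i::finite) set"
  assumes "vec.subspace S"
  shows "CARD('i) \<le> vec.dim (perp S) + vec.dim S"
proof -
  obtain B and e :: "'a^'i \<Rightarrow> 'i" where B: "vec.independent B" "vec.span B = S" "card B = vec.dim S"
     "finite B" "inj_on e B"
    using basis_inj[OF assms] by blast
  define g where "g = (\<lambda>y. \<chi> i. if i \<in> e ` B then dotp (the_inv_into B e i) y else 0)"
  note pc = perp_construct[OF B(5) g_def]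
  have rn: "vec.dim (range g) + vec.dim (perp B) = CARD('i)"
    using rank_nullity_vec[OF pc(1)] pc(2) by simp
  have "perp B = perp S" using perp_span[of B] B(2) by simp
  then have "vec.dim (range g) + vec.dim (perp S) = CARD('i)" using rn by simp
  moreover have "vec.dim (range g) \<le> card B"
  proof -
    have "vec.dim (range g) \<le> vec.dim {x::'a^'i. \<forall>i. i \<notin> e ` B \<longrightarrow> x$i = 0}"
      by (rule vec.dim_subset[OF pc(3)])
    also have "\<dots> = card (e ` B)" by (rule dim_substandard_cart)
    also have "\<dots> = card B" using card_image[OF B(5)] .
    finally show ?thesis .
  qed
  ultimately show ?thesis using B(3) by linarith
qed

lemma dim_perp:
  fixes S :: "('a::field^'i::finite) set"
  assumes "vec.subspace S"
  shows "vec.dim (perp S) + vec.dim S = CARD('i)"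
proof -
  obtain B and e :: "'a^'i \<Rightarrow> 'i" where B: "vec.independent B" "vec.span B = S" "card B = vec.dim S"
     "finite B" "inj_on e B"
    using basis_inj[OF assms] by blast
  define g where "g = (\<lambda>y. \<chi> i. if i \<in> e ` B then dotp (the_inv_into B e i) y else 0)"
  note pc = perp_construct[OF B(5) g_def]
  have rn: "vec.dim (range g) + vec.dim (perp B) = CARD('i)"
    using rank_nullity_vec[OF pc(1)] pc(2) by simp
  have pS: "perp B = perp S" using perp_span[of B] B(2) by simp
  let ?Z = "{x::'a^'i. \<forall>i. i \<notin> e ` B \<longrightarrow> x$i = 0}"
  have dimZ: "vec.dim ?Z = card B"
  proof -
    have "vec.dim ?Z = card (e ` B)" by (rule dim_substandard_cart)
    then show ?thesis using card_image[OF B(5)] by simp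
  qed
  have "vec.dim (range g) \<ge> card B"
  proof (rule ccontr)
    assume less: "\<not> card B \<le> vec.dim (range g)"
    let ?U = "range g"
    let ?P = "perp ?U"
    have sU: "vec.subspace ?U" by (rule subspace_range_linear[OF pc(1)])
    have low: "CARD('i) \<le> vec.dim ?P + vec.dim ?U" by (rule perp_lower[OF sU])
    have "vec.dim {x + y |x y. x \<in> ?Z \<and> y \<in> ?P} + vec.dim (?Z \<inter> ?P) = vec.dim ?Z + vec.dim ?P"
      by (rule vec.dim_sums_Int[OF subspace_substd subspace_perp])
    moreover have "vec.dim {x + y |x y. x \<in> ?Z \<and> y \<in> ?P} \<le> CARD('i)" by (rule dim_le_card)
    ultimately have "vec.dim (?Z \<inter> ?P) \<noteq> 0" using low less dimZ by linarith
    then have "\<not> (?Z \<inter> ?P \<subseteq> {0})" by simp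
    then obtain c where c: "c \<in> ?Z" "c \<in> ?P" "c \<noteq> 0" by blast
    define v where "v = (\<Sum>b\<in>B. c $ e b *s b)"
    have dv: "dotp v y = 0" for y
    proof -
      have "dotp (g y) c = 0" using c(2) unfolding perp_def by auto
      moreover have "dotp (g y) c = (\<Sum>i\<in>e ` B. g y $ i * c $ i)"
        unfolding dotp_def using c(1) by (intro sum.mono_neutral_right) auto
      moreover have "(\<Sum>i\<in>e ` B. g y $ i * c $ i) = (\<Sum>b\<in>B. g y $ e b * c $ e b)"
        using sum.reindex[OF B(5)] by (simp add: comp_def)
      moreover have "(\<Sum>b\<in>B. g y $ e b * c $ e b) = dotp v y"
        unfolding v_def using pc(4) B(4)
        by (simp add: dotp_sum_left dotp_scale_left mult.commute)
      ultimately show ?thesis by simp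
    qed
    have v0: "v = 0"
    proof -
      have "v $ j = 0" for j using dv[of "axis j 1"] dotp_comm[of v "axis j 1"] dotp_axis_left[of j v] by simp
      then show ?thesis by (simp add: vec_eq_iff)
    qed
    have ie: "\<forall>cc. (\<Sum>v\<in>B. cc v *s v) = 0 \<longrightarrow> (\<forall>v\<in>B. cc v = 0)"
      using B(1) unfolding vec.independent_explicit by simp
    have "\<forall>b\<in>B. c $ e b = 0"
      using ie[rule_format, of "\<lambda>b. c $ e b"] v0 unfolding v_def by simp
    then have "c $ i = 0" for i
    proof (cases "i \<in> e ` B")
      case True
      then obtain b where "b \<in> B" "i = e b" by blast
      then show ?thesis using \<open>\<forall>b\<in>B. c $ e b = 0\<close> by simp
    next
      case False
      then show ?thesis using c(1) by simp
    qed
    then have "c = 0" by (simp add: vec_eq_iff)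
    then show False using c(3) by simp
  qed
  moreover have "vec.dim (range g) \<le> card B"
    using vec.dim_subset[OF pc(3)] dimZ by simp
  moreover have "vec.dim (range g) + vec.dim (perp S) = CARD('i)" using rn pS by simp
  ultimately show ?thesis using B(3) by linarith
qed

lemma perp_perp:
  fixes S :: "('a::field^'i::finite) set"
  assumes "vec.subspace S"
  shows "perp (perp S) = S"
proof -
  have "S \<subseteq> perp (perp S)" unfolding perp_def by (auto simp: dotp_comm)
  moreover have "vec.dim (perp (perp S)) = vec.dim S"
    using dim_perp[OF assms] dim_perp[OF subspace_perp[of S]] by linarith
  ultimately show ?thesis
    using vec.subspace_dim_equal[OF assms subspace_perp[of "perp S"]] by simp
qed



definition emb :: "'m::finite \<Rightarrow> 'a::field^'n::finite \<Rightarrow> ('a, 'm, 'n) mat" where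
  "emb i x = (\<chi> p. if fst p = i then x $ snd p else 0)"

lemma row_of_index: "row_of V i $ j = V $ (i, j)"
  unfolding row_of_def by simp

lemma row_of_emb: "row_of (emb i x) a = (if a = i then x else 0)"
  unfolding row_of_def emb_def by (auto simp: vec_eq_iff)

lemma row_of_add: "row_of (V + W) i = row_of V i + row_of W i"
  unfolding row_of_def by (auto simp: vec_eq_iff)
lemma row_of_scale: "row_of (c *s V) i = c *s row_of V i"
  unfolding row_of_def by (auto simp: vec_eq_iff)
lemma row_of_zero: "row_of 0 i = 0"
  unfolding row_of_def by (auto simp: vec_eq_iff)
lemma row_of_diff: "row_of (V - W) i = row_of V i - row_of W i"
  unfolding row_of_def by (auto simp: vec_eq_iff)

lemma mat_eq_rows: "(\<And>i. row_of V i = row_of W i) \<Longrightarrow> V = W"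
proof -
  assume h: "\<And>i. row_of V i = row_of W i"
  have "V $ p = W $ p" for p
  proof -
    obtain i j where "p = (i, j)" by (cases p)
    then show ?thesis using arg_cong[OF h[of i], of "\<lambda>v. v $ j"] by (simp add: row_of_index)
  qed
  then show ?thesis by (simp add: vec_eq_iff)
qed

lemma emb_add: "emb i (x + y) = emb i x + emb i y"
  unfolding emb_def by (auto simp: vec_eq_iff)
lemma emb_scale: "emb i (c *s x) = c *s emb i x"
  unfolding emb_def by (auto simp: vec_eq_iff)
lemma emb_zero: "emb i 0 = 0"
  unfolding emb_def by (auto simp: vec_eq_iff)

lemma linear_emb: "Vector_Spaces.linear (*s) (*s) (emb i :: 'a::field^'n::finite \<Rightarrow> ('a, 'm::finite, 'n) mat)"
  unfolding Vector_Spaces.linear_iff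
  by (simp add: emb_add emb_scale vec.vector_space_axioms)

lemma VL_iff:
  assumes "vec.subspace L"
  shows "V \<in> VL L \<longleftrightarrow> (\<forall>i. row_of V i \<in> L)"
proof
  assume "V \<in> VL L"
  then have "Row V \<subseteq> L" unfolding VL_def by simp
  then show "\<forall>i. row_of V i \<in> L" unfolding Row_def using vec.span_superset by blast
next
  assume "\<forall>i. row_of V i \<in> L"
  then have "range (row_of V) \<subseteq> L" by blast
  then have "Row V \<subseteq> L" unfolding Row_def using vec.span_minimal assms by blast
  then show "V \<in> VL L" unfolding VL_def by simp
qed

lemma subspace_VL:
  assumes "vec.subspace L"
  shows "vec.subspace (VL L :: ('a::field, 'm::finite, 'n::finite) mat set)"
proof -
  have eq: "(VL L :: ('a, 'm, 'n) mat set) = {V. \<forall>i. row_of V i \<in> L}" using VL_iff[OF assms] by auto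
  show ?thesis unfolding eq using assms unfolding vec.subspace_def
    by (auto simp: row_of_add row_of_scale row_of_zero)
qed

lemma VL_mono: "L \<subseteq> L' \<Longrightarrow> VL L \<subseteq> VL L'"
  unfolding VL_def by auto

lemma VL_UNIV: "VL UNIV = UNIV"
  unfolding VL_def by auto

lemma trace_dotp: "trace_prod X Y = dotp X Y"
proof -
  have "trace_prod X Y = (\<Sum>p\<in>UNIV \<times> UNIV. X $ p * Y $ p)"
    unfolding trace_prod_def by (simp add: sum.cartesian_product)
  then show ?thesis unfolding dotp_def by (simp add: UNIV_Times_UNIV)
qed

lemma dual_perp: "dual_code C = perp C"
  unfolding dual_code_def perp_def by (simp add: trace_dotp)

lemma dotp_rows: "dotp X Y = (\<Sum>i\<in>UNIV. dotp (row_of X i) (row_of Y i))"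
proof -
  have "dotp X Y = trace_prod X Y" by (simp add: trace_dotp)
  also have "\<dots> = (\<Sum>i\<in>UNIV. dotp (row_of X i) (row_of Y i))"
    unfolding trace_prod_def dotp_def by (simp add: row_of_index)
  finally show ?thesis .
qed

lemma dotp_emb: "dotp (emb i x) Y = dotp x (row_of Y i)"
proof -
  have "dotp (emb i x) Y = (\<Sum>a\<in>UNIV. if a = i then dotp x (row_of Y a) else 0)"
    unfolding dotp_rows by (rule sum.cong) (auto simp: row_of_emb)
  also have "\<dots> = dotp x (row_of Y i)" by simp
  finally show ?thesis .
qed

lemma VL_perp:
  assumes L: "vec.subspace L"
  shows "(VL (perp L) :: ('a::field, 'm::finite, 'n::finite) mat set) = perp (VL L)"
proof
  show "(VL (perp L) :: ('a, 'm, 'n) mat set) \<subseteq> perp (VL L)"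
  proof
    fix Y :: "('a, 'm, 'n) mat" assume "Y \<in> VL (perp L)"
    then have Y: "\<forall>i. row_of Y i \<in> perp L" using VL_iff[OF subspace_perp] by blast
    show "Y \<in> perp (VL L)" unfolding perp_def
    proof (intro CollectI ballI)
      fix X assume "X \<in> (VL L :: ('a, 'm, 'n) mat set)"
      then have X: "\<forall>i. row_of X i \<in> L" using VL_iff[OF L] by blast
      have "dotp (row_of X i) (row_of Y i) = 0" for i using X Y unfolding perp_def by blast
      then show "dotp X Y = 0" unfolding dotp_rows by simp
    qed
  qed
  show "perp (VL L) \<subseteq> (VL (perp L) :: ('a, 'm, 'n) mat set)"
  proof
    fix Y :: "('a, 'm, 'n) mat" assume Y: "Y \<in> perp (VL L)"
    have "row_of Y i \<in> perp L" for i
      unfolding perp_def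
    proof (intro CollectI ballI)
      fix x assume "x \<in> L"
      then have "emb i x \<in> (VL L :: ('a, 'm, 'n) mat set)"
        unfolding VL_iff[OF L] using vec.subspace_0[OF L] by (simp add: row_of_emb)
      then have "dotp (emb i x) Y = 0" using Y unfolding perp_def by blast
      then show "dotp x (row_of Y i) = 0" by (simp add: dotp_emb)
    qed
    then show "Y \<in> VL (perp L)" using VL_iff[OF subspace_perp] by blast
  qed
qed

definition XI :: "('a::field^'n::finite) set \<Rightarrow> 'm::finite set \<Rightarrow> ('a, 'm, 'n) mat set" where
  "XI L I = {V. \<forall>i. (i \<in> I \<longrightarrow> row_of V i \<in> L) \<and> (i \<notin> I \<longrightarrow> row_of V i = 0)}"

lemma subspace_XI: "vec.subspace L \<Longrightarrow> vec.subspace (XI L I)"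
  unfolding vec.subspace_def XI_def by (auto simp: row_of_add row_of_scale row_of_zero)

lemma dim_XI:
  assumes L: "vec.subspace L" and "finite I"
  shows "vec.dim (XI L I :: ('a::field, 'm::finite, 'n::finite) mat set) = card I * vec.dim L"
  using \<open>finite I\<close>
proof (induction I rule: finite_induct)
  case empty
  have "XI L {} \<subseteq> ({0} :: ('a, 'm, 'n) mat set)"
    unfolding XI_def using mat_eq_rows[of _ 0] by (auto simp: row_of_zero)
  then show ?case by simp
next
  case (insert a I)
  let ?R = "(emb a ` L :: ('a, 'm, 'n) mat set)"
  have sX: "vec.subspace (XI L I :: ('a, 'm, 'n) mat set)" by (rule subspace_XI[OF L])
  have sR: "vec.subspace ?R"
    unfolding vec.subspace_def
  proof (intro conjI ballI allI)
    have "emb a 0 \<in> ?R" using vec.subspace_0[OF L] by blast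
    then show "0 \<in> ?R" by (simp add: emb_zero)
  next
    fix x y assume "x \<in> ?R" "y \<in> ?R"
    then obtain u v where "x = emb a u" "y = emb a v" "u \<in> L" "v \<in> L" by blast
    then have "x + y = emb a (u + v)" "u + v \<in> L" using vec.subspace_add[OF L] by (auto simp: emb_add)
    then show "x + y \<in> ?R" by blast
  next
    fix c x assume "x \<in> ?R"
    then obtain u where "x = emb a u" "u \<in> L" by blast
    then have "c *s x = emb a (c *s u)" "c *s u \<in> L" using vec.subspace_scale[OF L] by (auto simp: emb_scale)
    then show "c *s x \<in> ?R" by blast
  qed
  have inj: "inj_on (emb a :: 'a^'n \<Rightarrow> ('a, 'm, 'n) mat) (vec.span L)"
  proof (rule inj_onI)
    fix x y assume "(emb a x :: ('a, 'm, 'n) mat) = emb a y"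
    then have "row_of (emb a x :: ('a, 'm, 'n) mat) a = row_of (emb a y :: ('a, 'm, 'n) mat) a" by simp
    then show "x = y" by (simp add: row_of_emb)
  qed
  have dimR: "vec.dim ?R = vec.dim L" by (rule vec.dim_image_eq[OF linear_emb inj])
  have sumeq: "{x + y |x y. x \<in> XI L I \<and> y \<in> ?R} = XI L (insert a I)"
  proof
    show "{x + y |x y. x \<in> XI L I \<and> y \<in> ?R} \<subseteq> XI L (insert a I)"
    proof
      fix z assume "z \<in> {x + y |x y. x \<in> XI L I \<and> y \<in> ?R}"
      then obtain x w where z: "z = x + emb a w" "x \<in> XI L I" "w \<in> L"
        by blast
      show "z \<in> XI L (insert a I)" unfolding XI_def
      proof (intro CollectI allI conjI impI)
        fix i assume "i \<in> insert a I"
        then show "row_of z i \<in> L"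
          using z insert.hyps(2) L unfolding XI_def
          by (auto simp: row_of_add row_of_emb vec.subspace_0)
      next
        fix i assume "i \<notin> insert a I"
        then show "row_of z i = 0"
          using z unfolding XI_def by (auto simp: row_of_add row_of_emb)
      qed
    qed
    show "XI L (insert a I) \<subseteq> {x + y |x y. x \<in> XI L I \<and> y \<in> ?R}"
    proof
      fix z :: "('a, 'm, 'n) mat" assume z: "z \<in> XI L (insert a I)"
      let ?y = "emb a (row_of z a) :: ('a, 'm, 'n) mat"
      let ?x = "z - ?y"
      have "?x \<in> XI L I"
        using z insert.hyps(2) unfolding XI_def
        by (auto simp: row_of_diff row_of_emb)
      moreover have "?y \<in> ?R" using z unfolding XI_def by auto
      moreover have "z = ?x + ?y" by simp
      ultimately show "z \<in> {x + y |x y. x \<in> XI L I \<and> y \<in> ?R}" by blast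
    qed
  qed
  have int0: "XI L I \<inter> ?R \<subseteq> {0}"
  proof
    fix z assume "z \<in> XI L I \<inter> ?R"
    then obtain x where "z = emb a x" "z \<in> XI L I" by blast
    then have "row_of z a = 0" using insert.hyps(2) unfolding XI_def by blast
    then have "x = 0" using \<open>z = emb a x\<close> by (simp add: row_of_emb)
    then show "z \<in> {0}" using \<open>z = emb a x\<close> by (simp add: emb_zero)
  qed
  have "vec.dim (XI L (insert a I)) + vec.dim (XI L I \<inter> ?R) = vec.dim (XI L I) + vec.dim ?R"
    using vec.dim_sums_Int[OF sX sR] sumeq by simp
  moreover have "vec.dim (XI L I \<inter> ?R) = 0" using int0 by simp
  ultimately show ?case using dimR insert.IH insert.hyps by simp
qed

lemma dim_VL:
  assumes L: "vec.subspace L"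
  shows "vec.dim (VL L :: ('a::field, 'm::finite, 'n::finite) mat set) = CARD('m) * vec.dim L"
proof -
  have "(VL L :: ('a, 'm, 'n) mat set) = XI L UNIV"
    unfolding XI_def using VL_iff[OF L] by auto
  then show ?thesis using dim_XI[OF L, of "UNIV :: 'm set"] by simp
qed



definition fmax :: "('a::field, 'm::finite, 'n::finite) mat set \<Rightarrow> nat \<Rightarrow> nat" where
  "fmax D u = Max {vec.dim (D \<inter> VL (L :: ('a^'n) set)) | L. vec.subspace L \<and> vec.dim L = u}"

lemma ex_sub_dim:
  assumes "u \<le> CARD('n::finite)"
  shows "\<exists>L::('a::field^'n) set. vec.subspace L \<and> vec.dim L = u"
proof -
  obtain d :: "'n set" where "d \<subseteq> UNIV" "card d = u"
    using obtain_subset_with_card_n[of u "UNIV :: 'n set"] assms by auto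
  then show ?thesis
    using subspace_substd[of d] dim_substandard_cart[of d] by (metis (no_types))
qed

lemma fmax_set_finite:
  fixes D :: "('a::field, 'm::finite, 'n::finite) mat set"
  shows "finite {vec.dim (D \<inter> VL (L :: ('a^'n) set)) | L. vec.subspace L \<and> vec.dim L = u}"
proof (rule finite_subset[of _ "{..CARD('m \<times> 'n)}"])
  show "{vec.dim (D \<inter> VL (L :: ('a^'n) set)) | L. vec.subspace L \<and> vec.dim L = u} \<subseteq> {..CARD('m \<times> 'n)}"
    using dim_le_card by fastforce
qed simp

lemma fmax_ge:
  fixes D :: "('a::field, 'm::finite, 'n::finite) mat set"
  assumes "vec.subspace L"
  shows "vec.dim (D \<inter> VL L) \<le> fmax D (vec.dim L)"
  unfolding fmax_def using assms by (intro Max_ge[OF fmax_set_finite]) blast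

lemma fmax_obt:
  fixes D :: "('a::field, 'm::finite, 'n::finite) mat set"
  assumes "u \<le> CARD('n)"
  shows "\<exists>L. vec.subspace L \<and> vec.dim L = u \<and> vec.dim (D \<inter> VL L) = fmax D u"
proof -
  let ?S = "{vec.dim (D \<inter> VL (L :: ('a^'n) set)) | L. vec.subspace L \<and> vec.dim L = u}"
  have "?S \<noteq> {}" using ex_sub_dim[OF assms] by auto
  then have "Max ?S \<in> ?S" using Max_in[OF fmax_set_finite] by blast
  then show ?thesis unfolding fmax_def by auto
qed

lemma fmax_le_dim:
  fixes D :: "('a::field, 'm::finite, 'n::finite) mat set"
  assumes "u \<le> CARD('n)"
  shows "fmax D u \<le> vec.dim D"
proof -
  obtain L :: "('a^'n) set" where L: "vec.dim (D \<inter> VL L) = fmax D u"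
    using fmax_obt[OF assms, of D] by auto
  have "vec.dim (D \<inter> VL L) \<le> vec.dim D" by (rule vec.dim_subset) blast
  then show ?thesis using L by simp
qed

lemma subspace_full:
  fixes L :: "('a::field^'n::finite) set"
  assumes "vec.subspace L" "vec.dim L = CARD('n)"
  shows "L = UNIV"
proof -
  have "vec.dim (UNIV :: ('a^'n) set) = CARD('n)" by (rule vec_dim_card)
  then show ?thesis using vec.subspace_dim_equal[OF assms(1) vec.subspace_UNIV] assms(2) by simp
qed

lemma fmax_Suc:
  fixes D :: "('a::field, 'm::finite, 'n::finite) mat set"
  assumes "u < CARD('n)"
  shows "fmax D u \<le> fmax D (Suc u)"
proof -
  obtain L where L: "vec.subspace L" "vec.dim L = u" "vec.dim (D \<inter> VL L) = fmax D u"
    using fmax_obt[of u D] assms by auto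
  have "vec.dim (UNIV :: ('a^'n) set) = CARD('n)" by (rule vec_dim_card)
  then have "L \<noteq> UNIV" using L(2) assms by auto
  then obtain x where x: "x \<notin> L" by blast
  let ?L' = "vec.span (insert x L)"
  have sL': "vec.subspace ?L'" by (rule vec.subspace_span)
  have spL: "vec.span L = L" using L(1) by simp
  have dL': "vec.dim ?L' = Suc u"
    using vec.dim_insert[of x L] x spL L(2) by simp
  have "L \<subseteq> ?L'" using vec.span_superset by blast
  then have "D \<inter> VL L \<subseteq> D \<inter> VL ?L'" using VL_mono by blast
  then have "vec.dim (D \<inter> VL L) \<le> vec.dim (D \<inter> VL ?L')" by (rule vec.dim_subset)
  also have "\<dots> \<le> fmax D (Suc u)" using fmax_ge[OF sL', of D] dL' by simp
  finally show ?thesis using L(3) by simp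
qed

lemma fmax_mono:
  fixes D :: "('a::field, 'm::finite, 'n::finite) mat set"
  assumes "u \<le> v" "v \<le> CARD('n)"
  shows "fmax D u \<le> fmax D v"
  using assms
proof (induction v)
  case 0 then show ?case by simp
next
  case (Suc v)
  show ?case
  proof (cases "u = Suc v")
    case True then show ?thesis by simp
  next
    case False
    then have "fmax D u \<le> fmax D v" using Suc by simp
    also have "\<dots> \<le> fmax D (Suc v)" using fmax_Suc[of v D] Suc.prems by simp
    finally show ?thesis .
  qed
qed

lemma fmax_0:
  fixes D :: "('a::field, 'm::finite, 'n::finite) mat set"
  shows "fmax D 0 = 0"
proof -
  obtain L where L: "vec.subspace L" "vec.dim L = 0" "vec.dim (D \<inter> VL L) = fmax D 0"
    using fmax_obt[of 0 D] by auto
  have L0: "L \<subseteq> {0}" using L(2) by simp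
  have "VL L \<subseteq> ({0} :: ('a, 'm, 'n) mat set)"
  proof
    fix V :: "('a, 'm, 'n) mat" assume "V \<in> VL L"
    then have "row_of V i \<in> L" for i using VL_iff[OF L(1)] by blast
    then have "row_of V i = row_of 0 i" for i using L0 by (auto simp: row_of_zero)
    then show "V \<in> {0}" using mat_eq_rows by blast
  qed
  then have "D \<inter> VL L \<subseteq> {0}" by blast
  then have "vec.dim (D \<inter> VL L) = 0" by simp
  then show ?thesis using L(3) by simp
qed

lemma fmax_n:
  fixes D :: "('a::field, 'm::finite, 'n::finite) mat set"
  shows "fmax D CARD('n) = vec.dim D"
proof -
  obtain L where L: "vec.subspace L" "vec.dim L = CARD('n)" "vec.dim (D \<inter> VL L) = fmax D CARD('n)"
    using fmax_obt[of "CARD('n)" D] by auto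
  have "L = UNIV" using subspace_full L by blast
  then have "D \<inter> VL L = D" by (simp add: VL_UNIV)
  then show ?thesis using L(3) by simp
qed

lemma dM_P:
  fixes D :: "('a::field, 'm::finite, 'n::finite) mat set"
  shows "(\<exists>L :: ('a ^ 'n) set. vec.subspace L \<and> vec.dim L = d \<and> t \<le> vec.dim (D \<inter> VL L))
    \<longleftrightarrow> (d \<le> CARD('n) \<and> t \<le> fmax D d)"
proof
  assume "\<exists>L :: ('a ^ 'n) set. vec.subspace L \<and> vec.dim L = d \<and> t \<le> vec.dim (D \<inter> VL L)"
  then obtain L :: "('a^'n) set" where L: "vec.subspace L" "vec.dim L = d" "t \<le> vec.dim (D \<inter> VL L)" by blast
  have "d \<le> CARD('n)" using L(2) dim_le_card[of L] by simp
  moreover have "t \<le> fmax D d" using L fmax_ge[OF L(1), of D] by simp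
  ultimately show "d \<le> CARD('n) \<and> t \<le> fmax D d" by simp
next
  assume "d \<le> CARD('n) \<and> t \<le> fmax D d"
  then show "\<exists>L :: ('a ^ 'n) set. vec.subspace L \<and> vec.dim L = d \<and> t \<le> vec.dim (D \<inter> VL L)"
    using fmax_obt[of d D] by force
qed

lemma dM_alt:
  fixes D :: "('a::field, 'm::finite, 'n::finite) mat set"
  shows "dM t D = (LEAST d. d \<le> CARD('n) \<and> t \<le> fmax D d)"
  unfolding dM_def using dM_P[of _ t D] by simp

lemma dM_char:
  fixes D :: "('a::field, 'm::finite, 'n::finite) mat set"
  assumes "1 \<le> t" "t \<le> vec.dim D"
  shows "1 \<le> dM t D \<and> dM t D \<le> CARD('n) \<and> fmax D (dM t D - 1) < t \<and> t \<le> fmax D (dM t D)"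
proof -
  let ?P = "\<lambda>d. d \<le> CARD('n) \<and> t \<le> fmax D d"
  have Pn: "?P CARD('n)" using fmax_n[of D] assms by simp
  have P: "?P (dM t D)" unfolding dM_alt by (rule LeastI[of ?P, OF Pn])
  have ne0: "dM t D \<noteq> 0"
  proof
    assume "dM t D = 0"
    then have "t \<le> fmax D 0" using P by simp
    then show False using fmax_0[of D] assms by simp
  qed
  have "\<not> ?P (dM t D - 1)"
    unfolding dM_alt by (rule not_less_Least) (use ne0 in \<open>simp add: dM_alt\<close>)
  then have "fmax D (dM t D - 1) < t" using P by auto
  then show ?thesis using P ne0 by simp
qed

lemma dM_unique:
  fixes D :: "('a::field, 'm::finite, 'n::finite) mat set"
  assumes "1 \<le> u" "u \<le> CARD('n)" "fmax D (u - 1) < t" "t \<le> fmax D u"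
  shows "dM t D = u"
  unfolding dM_alt
proof (rule Least_equality)
  show "u \<le> CARD('n) \<and> t \<le> fmax D u" using assms by simp
  fix d assume d: "d \<le> CARD('n) \<and> t \<le> fmax D d"
  show "u \<le> d"
  proof (rule ccontr)
    assume "\<not> u \<le> d"
    then have "fmax D d \<le> fmax D (u - 1)" using fmax_mono[of d "u - 1" D] assms by simp
    then show False using d assms by simp
  qed
qed

lemma perp_sum:
  assumes "vec.subspace S" "vec.subspace T"
  shows "perp {x + y |x y. x \<in> S \<and> y \<in> T} = perp S \<inter> perp (T :: ('a::field^'i::finite) set)"
proof
  show "perp {x + y |x y. x \<in> S \<and> y \<in> T} \<subseteq> perp S \<inter> perp T"
  proof
    fix z assume z: "z \<in> perp {x + y |x y. x \<in> S \<and> y \<in> T}"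
    have "x + 0 \<in> {x + y |x y. x \<in> S \<and> y \<in> T}" if "x \<in> S" for x
      using that vec.subspace_0[OF assms(2)] by blast
    then have "z \<in> perp S" using z unfolding perp_def by auto
    moreover have "0 + y \<in> {x + y |x y. x \<in> S \<and> y \<in> T}" if "y \<in> T" for y
      using that vec.subspace_0[OF assms(1)] by blast
    then have "z \<in> perp T" using z unfolding perp_def by auto
    ultimately show "z \<in> perp S \<inter> perp T" by blast
  qed
  show "perp S \<inter> perp T \<subseteq> perp {x + y |x y. x \<in> S \<and> y \<in> T}"
    unfolding perp_def by (auto simp: dotp_add_left)
qed

lemma KI:
  fixes C :: "('a::field, 'm::finite, 'n::finite) mat set"
  assumes C: "vec.subspace C" and L: "vec.subspace L"
  shows "vec.dim (dual_code C \<inter> VL (perp L)) + vec.dim C + CARD('m) * vec.dim L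
         = CARD('m) * CARD('n) + vec.dim (C \<inter> VL L)"
proof -
  let ?V = "VL L :: ('a, 'm, 'n) mat set"
  let ?S = "{x + y |x y. x \<in> C \<and> y \<in> ?V}"
  have sV: "vec.subspace ?V" by (rule subspace_VL[OF L])
  have sS: "vec.subspace ?S" by (rule vec.subspace_sums[OF C sV])
  have eq: "dual_code C \<inter> VL (perp L) = perp ?S"
    using perp_sum[OF C sV] VL_perp[OF L] dual_perp by metis
  have d1: "vec.dim (perp ?S) + vec.dim ?S = CARD('m) * CARD('n)"
    using dim_perp[OF sS] by simp
  have d2: "vec.dim ?S + vec.dim (C \<inter> ?V) = vec.dim C + CARD('m) * vec.dim L"
    using vec.dim_sums_Int[OF C sV] dim_VL[OF L] by simp
  show ?thesis using eq d1 d2 by simp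
qed

lemma duality:
  fixes C :: "('a::field, 'm::finite, 'n::finite) mat set"
  assumes C: "vec.subspace C" and u: "u \<le> CARD('n)"
  shows "fmax (dual_code C) (CARD('n) - u) + vec.dim C + CARD('m) * u
         = CARD('m) * CARD('n) + fmax C u"
proof -
  have ge: "fmax (dual_code C) (CARD('n) - u) + vec.dim C + CARD('m) * u
         \<ge> CARD('m) * CARD('n) + fmax C u"
  proof -
    obtain L :: "('a^'n) set" where L: "vec.subspace L" "vec.dim L = u" "vec.dim (C \<inter> VL L) = fmax C u"
      using fmax_obt[OF u, of C] by auto
    have dM: "vec.dim (perp L) = CARD('n) - u" using dim_perp[OF L(1)] L(2) by simp
    have "vec.dim (dual_code C \<inter> VL (perp L)) \<le> fmax (dual_code C) (CARD('n) - u)"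
      using fmax_ge[OF subspace_perp[of L], of "dual_code C"] dM by simp
    then show ?thesis using KI[OF C L(1)] L by simp
  qed
  have le: "fmax (dual_code C) (CARD('n) - u) + vec.dim C + CARD('m) * u
         \<le> CARD('m) * CARD('n) + fmax C u"
  proof -
    obtain M :: "('a^'n) set" where M: "vec.subspace M" "vec.dim M = CARD('n) - u"
       "vec.dim (dual_code C \<inter> VL M) = fmax (dual_code C) (CARD('n) - u)"
      using fmax_obt[of "CARD('n) - u" "dual_code C"] by auto
    let ?L = "perp M"
    have dL: "vec.dim ?L = u" using dim_perp[OF M(1)] M(2) u by simp
    have pp: "perp ?L = M" by (rule perp_perp[OF M(1)])
    have "vec.dim (C \<inter> VL ?L) \<le> fmax C u" using fmax_ge[OF subspace_perp[of M], of C] dL by simp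
    then show ?thesis using KI[OF C subspace_perp[of M]] pp M dL by simp
  qed
  show ?thesis using ge le by simp
qed

lemma residue_split:
  fixes a b m r :: int
  assumes m: "0 < m" and ab: "a \<le> b"
  shows "(\<exists>t. t mod m = r mod m \<and> a < t \<and> t \<le> b) \<longleftrightarrow> \<not> (\<exists>t. t mod m = r mod m \<and> b < t \<and> t \<le> a + m)"
proof -
  define t0 where "t0 = a + 1 + (r - a - 1) mod m"
  have t0m: "t0 mod m = r mod m"
  proof -
    have "t0 mod m = (a + 1 + (r - a - 1)) mod m" unfolding t0_def by (simp add: mod_add_right_eq)
    then show ?thesis by simp
  qed
  have t0r: "a < t0" "t0 \<le> a + m"
    unfolding t0_def using pos_mod_sign[OF m, of "r - a - 1"] pos_mod_bound[OF m, of "r - a - 1"] by linarith+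
  have uniq: "t = t0" if "t mod m = r mod m" "a < t" "t \<le> a + m" for t
  proof -
    have "t mod m = t0 mod m" using that t0m by simp
    then have "m dvd (t - t0)" by (simp add: mod_eq_dvd_iff)
    then obtain q where q: "t - t0 = m * q" by (auto elim: dvdE)
    have "m * q < m * 1" using q that t0r by linarith
    then have "q < 1" using m by (simp add: mult_less_cancel_left_pos)
    moreover have "m * (-1) < m * q" using q that t0r by linarith
    then have "-1 < q" using m mult_less_cancel_left_pos[OF m, of "-1" q] by linarith
    ultimately have "q = 0" by simp
    then show ?thesis using q by simp
  qed
  show ?thesis
  proof (cases "t0 \<le> b")
    case True
    have "\<exists>t. t mod m = r mod m \<and> a < t \<and> t \<le> b" using True t0m t0r by blast
    moreover have "\<not> (\<exists>t. t mod m = r mod m \<and> b < t \<and> t \<le> a + m)"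
    proof
      assume "\<exists>t. t mod m = r mod m \<and> b < t \<and> t \<le> a + m"
      then obtain t where t: "t mod m = r mod m" "b < t" "t \<le> a + m" by blast
      then have "t = t0" using uniq ab by simp
      then show False using t True by simp
    qed
    ultimately show ?thesis by blast
  next
    case False
    have "\<exists>t. t mod m = r mod m \<and> b < t \<and> t \<le> a + m" using False t0m t0r by force
    moreover have "\<not> (\<exists>t. t mod m = r mod m \<and> a < t \<and> t \<le> b)"
    proof
      assume "\<exists>t. t mod m = r mod m \<and> a < t \<and> t \<le> b"
      then obtain t where t: "t mod m = r mod m" "a < t" "t \<le> b" by blast
      then have "t = t0" using uniq False t0r by simp
      then show False using t False by simp
    qed
    ultimately show ?thesis by blast
  qed
qed

lemma shift_ex:
  fixes m p c A B :: int
  shows "(\<exists>s. s mod m = p mod m \<and> A < s \<and> s \<le> B) \<longleftrightarrow> (\<exists>t. t mod m = (p + c) mod m \<and> A + c < t \<and> t \<le> B + c)"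
proof
  assume "\<exists>s. s mod m = p mod m \<and> A < s \<and> s \<le> B"
  then obtain s where s: "s mod m = p mod m" "A < s" "s \<le> B" by blast
  have "(s + c) mod m = (p + c) mod m" using s(1) by (metis mod_add_cong)
  then show "\<exists>t. t mod m = (p + c) mod m \<and> A + c < t \<and> t \<le> B + c" using s by (intro exI[of _ "s + c"]) simp
next
  assume "\<exists>t. t mod m = (p + c) mod m \<and> A + c < t \<and> t \<le> B + c"
  then obtain t where t: "t mod m = (p + c) mod m" "A + c < t" "t \<le> B + c" by blast
  have "(t + (- c)) mod m = (p + c + (- c)) mod m" using t(1) by (metis mod_add_cong)
  then have "(t - c) mod m = p mod m" by simp
  then show "\<exists>s. s mod m = p mod m \<and> A < s \<and> s \<le> B" using t by (intro exI[of _ "t - c"]) simp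
qed



lemma dimD_int:
  fixes C :: "('a::field, 'm::finite, 'n::finite) mat set"
  assumes C: "vec.subspace C"
  shows "int (vec.dim (dual_code C)) = int CARD('m) * int CARD('n) - int (vec.dim C)"
proof -
  have "vec.dim (dual_code C) + vec.dim C = CARD('m) * CARD('n)"
    using dim_perp[OF C] dual_perp[of C] by simp
  then have "int (vec.dim (dual_code C)) + int (vec.dim C) = int CARD('m) * int CARD('n)"
    by (metis of_nat_add of_nat_mult)
  then show ?thesis by linarith
qed

lemma subspace_dual: "vec.subspace (dual_code C)"
  using subspace_perp dual_perp by metis

lemma mod_repr:
  fixes s p m :: int
  assumes "s mod m = p mod m"
  shows "s = p + ((s - p) div m) * m"
proof -
  have "(s - p) mod m = 0" using assms by (simp add: mod_diff_cong mod_eq_0_iff_dvd mod_eq_dvd_iff)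
  then show ?thesis using div_mult_mod_eq[of "s - p" m] by simp
qed

lemma W_dual_iff:
  fixes C :: "('a::field, 'm::finite, 'n::finite) mat set"
  assumes C: "vec.subspace C"
  shows "x \<in> W_dual p C \<longleftrightarrow> (1 \<le> x \<and> x \<le> int CARD('n) \<and>
    (\<exists>s. s mod int CARD('m) = p mod int CARD('m) \<and> int (fmax (dual_code C) (nat x - 1)) < s
         \<and> s \<le> int (fmax (dual_code C) (nat x))))"
proof -
  let ?m = "int CARD('m)"
  let ?D = "dual_code C"
  have kD: "int (vec.dim ?D) = ?m * int CARD('n) - int (vec.dim C)" by (rule dimD_int[OF C])
  have W: "W_dual p C = {int (dM (nat (p + r * ?m)) ?D) | r. 1 \<le> p + r * ?m \<and> p + r * ?m \<le> ?m * int CARD('n) - int (vec.dim C)}"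
    unfolding W_dual_def Let_def by simp
  show ?thesis
  proof
    assume "x \<in> W_dual p C"
    then obtain r where x: "x = int (dM (nat (p + r * ?m)) ?D)"
      and r: "1 \<le> p + r * ?m" "p + r * ?m \<le> ?m * int CARD('n) - int (vec.dim C)"
      using W by blast
    define s where "s = p + r * ?m"
    have t1: "1 \<le> nat s" using r s_def by simp
    have t2: "nat s \<le> vec.dim ?D" using r kD s_def by simp
    note ch = dM_char[OF t1 t2]
    have nx: "nat x = dM (nat s) ?D" using x s_def by simp
    have smod: "s mod ?m = p mod ?m" unfolding s_def by simp
    have s0: "int (nat s) = s" using r s_def by simp
    have "fmax ?D (nat x - 1) < nat s" using ch nx by simp
    then have "int (fmax ?D (nat x - 1)) < int (nat s)" by (simp only: of_nat_less_iff)
    then have "int (fmax ?D (nat x - 1)) < s" using s0 by simp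
    moreover have "nat s \<le> fmax ?D (nat x)" using ch nx by simp
    then have "int (nat s) \<le> int (fmax ?D (nat x))" by (simp only: of_nat_le_iff)
    then have "s \<le> int (fmax ?D (nat x))" using s0 by simp
    moreover have "1 \<le> x" "x \<le> int CARD('n)" using ch x s_def by auto
    ultimately show "1 \<le> x \<and> x \<le> int CARD('n) \<and>
      (\<exists>s. s mod ?m = p mod ?m \<and> int (fmax ?D (nat x - 1)) < s \<and> s \<le> int (fmax ?D (nat x)))"
      using smod by blast
  next
    assume "1 \<le> x \<and> x \<le> int CARD('n) \<and>
      (\<exists>s. s mod ?m = p mod ?m \<and> int (fmax ?D (nat x - 1)) < s \<and> s \<le> int (fmax ?D (nat x)))"
    then obtain s where x1: "1 \<le> x" and x2: "x \<le> int CARD('n)" and s: "s mod ?m = p mod ?m"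
      "int (fmax ?D (nat x - 1)) < s" "s \<le> int (fmax ?D (nat x))" by blast
    have nxn: "nat x \<le> CARD('n)" using x2 by simp
    have s1: "1 \<le> s" using s(2) by simp
    have "fmax ?D (nat x) \<le> vec.dim ?D" by (rule fmax_le_dim[OF nxn])
    then have s2: "s \<le> ?m * int CARD('n) - int (vec.dim C)" using s(3) kD by linarith
    have "dM (nat s) ?D = nat x"
      by (rule dM_unique) (use x1 nxn s s1 in auto)
    moreover have r: "p + ((s - p) div ?m) * ?m = s" by (rule sym[OF mod_repr[OF s(1)]])
    ultimately have "x = int (dM (nat (p + ((s - p) div ?m) * ?m)) ?D) \<and> 1 \<le> p + ((s - p) div ?m) * ?m
        \<and> p + ((s - p) div ?m) * ?m \<le> ?m * int CARD('n) - int (vec.dim C)"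
      unfolding r using s1 s2 x1 by simp
    then show "x \<in> W_dual p C" unfolding W by blast
  qed
qed

lemma Wbar_iff:
  fixes C :: "('a::field, 'm::finite, 'n::finite) mat set"
  assumes C: "vec.subspace C"
  shows "x \<in> Wbar q C \<longleftrightarrow> (1 \<le> x \<and> x \<le> int CARD('n) \<and>
    (\<exists>t. t mod int CARD('m) = q mod int CARD('m) \<and> int (fmax C (CARD('n) - nat x)) < t
         \<and> t \<le> int (fmax C (CARD('n) + 1 - nat x))))"
proof -
  let ?m = "int CARD('m)"
  let ?n = "CARD('n)"
  have W: "Wbar q C = {int ?n + 1 - int (dM (nat (q + r * ?m)) C) | r. 1 \<le> q + r * ?m \<and> q + r * ?m \<le> int (vec.dim C)}"
    unfolding Wbar_def Let_def by simp
  show ?thesis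
  proof
    assume "x \<in> Wbar q C"
    then obtain r where x: "x = int ?n + 1 - int (dM (nat (q + r * ?m)) C)"
      and r: "1 \<le> q + r * ?m" "q + r * ?m \<le> int (vec.dim C)"
      using W by blast
    define t where "t = q + r * ?m"
    have t1: "1 \<le> nat t" using r t_def by simp
    have t2: "nat t \<le> vec.dim C" using r t_def by simp
    define u where "u = dM (nat t) C"
    note ch = dM_char[OF t1 t2, folded u_def]
    have nx: "nat x = ?n + 1 - u" using x t_def u_def ch by auto
    have e1: "?n - nat x = u - 1" and e2: "?n + 1 - nat x = u" using nx ch by auto
    have tmod: "t mod ?m = q mod ?m" unfolding t_def by simp
    have s0: "int (nat t) = t" using r t_def by simp
    have "fmax C (?n - nat x) < nat t" using ch e1 by simp
    then have "int (fmax C (?n - nat x)) < int (nat t)" by (simp only: of_nat_less_iff)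
    then have "int (fmax C (?n - nat x)) < t" using s0 by simp
    moreover have "nat t \<le> fmax C (?n + 1 - nat x)" using ch e2 by simp
    then have "int (nat t) \<le> int (fmax C (?n + 1 - nat x))" by (simp only: of_nat_le_iff)
    then have "t \<le> int (fmax C (?n + 1 - nat x))" using s0 by simp
    moreover have "1 \<le> x" "x \<le> int ?n" using ch x t_def u_def by auto
    ultimately show "1 \<le> x \<and> x \<le> int ?n \<and>
      (\<exists>t. t mod ?m = q mod ?m \<and> int (fmax C (?n - nat x)) < t \<and> t \<le> int (fmax C (?n + 1 - nat x)))"
      using tmod by blast
  next
    assume "1 \<le> x \<and> x \<le> int ?n \<and>
      (\<exists>t. t mod ?m = q mod ?m \<and> int (fmax C (?n - nat x)) < t \<and> t \<le> int (fmax C (?n + 1 - nat x)))"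
    then obtain t where x1: "1 \<le> x" and x2: "x \<le> int ?n" and t: "t mod ?m = q mod ?m"
      "int (fmax C (?n - nat x)) < t" "t \<le> int (fmax C (?n + 1 - nat x))" by blast
    define u where "u = ?n + 1 - nat x"
    have u1: "1 \<le> u" "u \<le> ?n" "u - 1 = ?n - nat x" using x1 x2 u_def by auto
    have t1: "1 \<le> t" using t(2) by simp
    have "fmax C u \<le> vec.dim C" by (rule fmax_le_dim[OF u1(2)])
    moreover have "t \<le> int (fmax C u)" using t(3) u_def by simp
    ultimately have t2: "t \<le> int (vec.dim C)" by linarith
    have f1: "fmax C (u - 1) < nat t" using t(2) u1(3) by (simp add: zless_nat_eq_int_zless)
    have f2: "nat t \<le> fmax C u" using t(3) u_def by (simp add: nat_le_iff)
    have "dM (nat t) C = u" by (rule dM_unique[OF u1(1) u1(2) f1 f2])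
    moreover have r: "q + ((t - q) div ?m) * ?m = t" by (rule sym[OF mod_repr[OF t(1)]])
    ultimately have "x = int ?n + 1 - int (dM (nat (q + ((t - q) div ?m) * ?m)) C) \<and> 1 \<le> q + ((t - q) div ?m) * ?m
        \<and> q + ((t - q) div ?m) * ?m \<le> int (vec.dim C)"
      unfolding r using t1 t2 x1 x2 u_def by auto
    then show "x \<in> Wbar q C" unfolding W by blast
  qed
qed

lemma core:
  fixes C :: "('a::field, 'm::finite, 'n::finite) mat set"
  assumes C: "vec.subspace C" and x1: "1 \<le> x" and x2: "x \<le> int CARD('n)"
  shows "(\<exists>t. t mod int CARD('m) = (p + int (vec.dim C)) mod int CARD('m) \<and> int (fmax C (CARD('n) - nat x)) < t
         \<and> t \<le> int (fmax C (CARD('n) + 1 - nat x)))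
     \<longleftrightarrow> \<not> (\<exists>s. s mod int CARD('m) = p mod int CARD('m) \<and> int (fmax (dual_code C) (nat x - 1)) < s
         \<and> s \<le> int (fmax (dual_code C) (nat x)))"
proof -
  let ?m = "int CARD('m)"
  let ?n = "CARD('n)"
  let ?k = "vec.dim C"
  let ?D = "dual_code C"
  define A where "A = ?n - nat x"
  define B where "B = ?n + 1 - nat x"
  have AB: "B = A + 1" "A \<le> ?n" "B \<le> ?n" "?n - B = nat x - 1" "?n - A = nat x"
    using x1 x2 unfolding A_def B_def by auto
  have dA: "fmax ?D (nat x) + ?k + CARD('m) * A = CARD('m) * ?n + fmax C A"
    using duality[OF C AB(2)] AB(5) by simp
  have dB: "fmax ?D (nat x - 1) + ?k + CARD('m) * B = CARD('m) * ?n + fmax C B"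
    using duality[OF C AB(3)] AB(4) by simp
  have iA: "int (fmax ?D (nat x)) = ?m * int ?n + int (fmax C A) - int ?k - ?m * int A"
    using arg_cong[OF dA, of int] by simp
  have iB: "int (fmax ?D (nat x - 1)) = ?m * int ?n + int (fmax C B) - int ?k - ?m * int B"
    using arg_cong[OF dB, of int] by simp
  define c where "c = int ?k + ?m * int B - ?m * int ?n"
  have pc: "(p + c) mod ?m = (p + int ?k) mod ?m"
  proof -
    have eq: "p + c = (p + int ?k) + (int B - int ?n) * ?m" unfolding c_def by (simp add: algebra_simps)
    show ?thesis unfolding eq by (rule mod_mult_self1)
  qed
  have m0: "0 < ?m" by simp
  have ab: "fmax C A \<le> fmax C B" using fmax_mono[of A B C] AB by simp
  have sh: "(\<exists>s. s mod ?m = p mod ?m \<and> int (fmax ?D (nat x - 1)) < s \<and> s \<le> int (fmax ?D (nat x)))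
     \<longleftrightarrow> (\<exists>t. t mod ?m = (p + int ?k) mod ?m \<and> int (fmax C B) < t \<and> t \<le> int (fmax C A) + ?m)"
  proof -
    have e1: "int (fmax ?D (nat x - 1)) + c = int (fmax C B)" using iB unfolding c_def by simp
    have e2: "int (fmax ?D (nat x)) + c = int (fmax C A) + ?m" using iA AB(1) unfolding c_def
      by (simp add: algebra_simps)
    show ?thesis using shift_ex[of ?m p "int (fmax ?D (nat x - 1))" "int (fmax ?D (nat x))" c] e1 e2 pc
      by simp
  qed
  show ?thesis
    unfolding sh A_def[symmetric] B_def[symmetric]
    using residue_split[OF m0, of "int (fmax C A)" "int (fmax C B)" "p + int ?k"] ab by simp
qed

theorem proposition18:
  fixes C :: "('a::field, 'm::finite, 'n::finite) mat set" and p :: int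
  assumes "vec.subspace C"
  shows "{1..int CARD('n)} = W_dual p C \<union> Wbar (p + int (vec.dim C)) C
         \<and> W_dual p C \<inter> Wbar (p + int (vec.dim C)) C = {}"
proof -
  have key: "(x \<in> Wbar (p + int (vec.dim C)) C \<longleftrightarrow> \<not> x \<in> W_dual p C)"
    if "1 \<le> x" "x \<le> int CARD('n)" for x
    using core[OF assms that, of p] W_dual_iff[OF assms, of x p] Wbar_iff[OF assms, of x "p + int (vec.dim C)"] that
    by simp
  have out: "\<not> x \<in> W_dual p C \<and> \<not> x \<in> Wbar (p + int (vec.dim C)) C"
    if "\<not> (1 \<le> x \<and> x \<le> int CARD('n))" for x
    using W_dual_iff[OF assms, of x p] Wbar_iff[OF assms, of x "p + int (vec.dim C)"] that
    by auto
  show ?thesis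
  proof
    show "{1..int CARD('n)} = W_dual p C \<union> Wbar (p + int (vec.dim C)) C"
    proof (intro set_eqI iffI)
      fix x assume "x \<in> {1..int CARD('n)}"
      then show "x \<in> W_dual p C \<union> Wbar (p + int (vec.dim C)) C" using key by auto
    next
      fix x assume "x \<in> W_dual p C \<union> Wbar (p + int (vec.dim C)) C"
      then show "x \<in> {1..int CARD('n)}" using out by auto
    qed
    show "W_dual p C \<inter> Wbar (p + int (vec.dim C)) C = {}"
    proof (rule equals0I)
      fix x assume x: "x \<in> W_dual p C \<inter> Wbar (p + int (vec.dim C)) C"
      then have "1 \<le> x \<and> x \<le> int CARD('n)" using out by blast
      then show False using key x by blast
    qed
  qed
qed

end
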